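(* Let $\tilde n\ge 1$, and let $\mathbf{S}_{i^*},\mathbf{S}_{2}\in\mathbb{R}^{\tilde n\times\tilde n}$ be two real matrices (the graph matrix of the reference view and the graph matrix of the view to be aligned). Let $\boldsymbol{\Delta}=\{\mathbf{P}\in[0,1]^{\tilde n\times\tilde n}:\ \mathbf{P}\mathbf{1}=\mathbf{1},\ \mathbf{P}^{\top}\mathbf{1}=\mathbf{1}\}$ be the set of doubly stochastic matrices, and let $\boldsymbol{\Gamma}:\mathbb{R}^{\tilde n\times\tilde n}\to\boldsymbol{\Delta}$ be the Euclidean (Frobenius-norm) projection onto $\boldsymbol{\Delta}$. Starting from any $\mathbf{P}^{(0)}\in\boldsymbol{\Delta}$, define the iterates $$\mathbf{P}^{(t+1)}=\tfrac12\Big(\mathbf{P}^{(t)}+\boldsymbol{\Gamma}\big(\mathbf{S}_{2}\,\mathbf{P}^{(t)}\,\mathbf{S}_{i^*}^{\top}\big)\Big),\qquad t=0,1,2,\dots$$ Suppose there is a constant $\varepsilon\ge 0$ such that $\|\mathbf{S}_{i^*}\otimes\mathbf{S}_{2}\|_2\le\varepsilon$, where $\otimes$ is the Kronecker product and $\|\cdot\|_2$ the spectral norm. Then the iteration converges at rate $\tfrac12+\varepsilon$, i.e. for every $t\ge1$, $$\|\mathbf{P}^{(t+1)}-\mathbf{P}^{(t)}\|_F\le\Big(\tfrac12+\varepsilon\Big)\|\mathbf{P}^{(t)}-\mathbf{P}^{(t-1)}\|_F .$$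
   Context: This iteration is a projected fixed-point scheme for the relaxed graph-matching problem $\max_{\mathbf{P}\in\boldsymbol{\Delta}}\operatorname{Tr}(\mathbf{S}_{i^*}^{\top}\mathbf{P}^{\top}\mathbf{S}_{2}\mathbf{P})$, whose gradient (up to a constant) is $\mathbf{S}_{2}\mathbf{P}\mathbf{S}_{i^*}^{\top}$. $\|\cdot\|_F$ denotes the Frobenius norm. *)

theory Defs
  imports "HOL-Analysis.Analysis"
begin

text \<open>Matrices are elements of real^'n^'n (row index outer). The library norm on
this type is the Frobenius norm (Euclidean norm of all entries).\<close>

definition doubly_stochastic :: "(real^'n^'n) set" where
  "doubly_stochastic = {P. (\<forall>i j. 0 \<le> P$i$j \<and> P$i$j \<le> 1)
      \<and> (\<forall>i. (\<Sum>j\<in>UNIV. P$i$j) = 1) \<and> (\<forall>j. (\<Sum>i\<in>UNIV. P$i$j) = 1)}"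

definition proj_ds :: "real^'n^'n \<Rightarrow> real^'n^'n" where
  "proj_ds X = closest_point doubly_stochastic X"

definition kron :: "real^'n^'m \<Rightarrow> real^'q^'p \<Rightarrow> real^('n \<times> 'q)^('m \<times> 'p)" where
  "kron A B = (\<chi> r. \<chi> c. A$(fst r)$(fst c) * B$(snd r)$(snd c))"

definition spec_norm :: "real^'n^'m \<Rightarrow> real" where
  "spec_norm M = onorm (\<lambda>x. M *v x)"

end

theory Submission
  imports Defs
begin
lemma ds_closed: "closed (doubly_stochastic :: (real^'n^'n) set)"
proof -
  have e: "doubly_stochastic = (\<Inter>i. \<Inter>j. {P::real^'n^'n. 0 \<le> P$i$j} \<inter> {P. P$i$j \<le> 1})
     \<inter> (\<Inter>i. {P::real^'n^'n. (\<Sum>j\<in>UNIV. P$i$j) = 1}) \<inter> (\<Inter>j. {P::real^'n^'n. (\<Sum>i\<in>UNIV. P$i$j) = 1})"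
    unfolding doubly_stochastic_def by auto
  have c: "continuous_on UNIV (\<lambda>P::real^'n^'n. P$i$j)" for i j
    by (intro continuous_intros)
  have c2: "continuous_on UNIV (\<lambda>P::real^'n^'n. \<Sum>j\<in>UNIV. P$i$j)" for i
    by (intro continuous_intros)
  have c3: "continuous_on UNIV (\<lambda>P::real^'n^'n. \<Sum>i\<in>UNIV. P$i$j)" for j
    by (intro continuous_intros)
  show ?thesis unfolding e
    apply (intro closed_Int closed_INT ballI)
    apply (rule closed_Collect_le; (rule c continuous_on_const)?)
    apply (rule closed_Collect_le; (rule c continuous_on_const)?)
    apply (rule closed_Collect_eq; (rule c2 continuous_on_const)?)
    apply (rule closed_Collect_eq; (rule c3 continuous_on_const)?)
    done
qed
definition vecm :: "real^'n^'n \<Rightarrow> real^('n \<times> 'n)" where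
  "vecm M = (\<chi> r. M $ snd r $ fst r)"

lemma norm_vecm: "norm (vecm M) = norm M"
proof -
  have "(\<Sum>r\<in>UNIV. vecm M $ r * vecm M $ r) = (\<Sum>a\<in>UNIV. \<Sum>b\<in>UNIV. M $ b $ a * M $ b $ a)"
    unfolding vecm_def UNIV_Times_UNIV[symmetric] sum.cartesian_product by (simp add: split_beta)
  also have "\<dots> = (\<Sum>b\<in>UNIV. \<Sum>a\<in>UNIV. M $ b $ a * M $ b $ a)" by (rule sum.swap)
  finally have "norm (vecm M) ^ 2 = norm M ^ 2"
    unfolding power2_norm_eq_inner inner_vec_def by simp
  then show ?thesis by (simp add: power2_eq_iff_nonneg)
qed
lemma kron_vecm: "kron S1 S2 *v vecm D = vecm (S2 ** D ** transpose S1)"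
proof -
  have "(kron S1 S2 *v vecm D) $ r = vecm (S2 ** D ** transpose S1) $ r" for r
  proof -
    obtain a b where r: "r = (a, b)" by (cases r)
    have "(kron S1 S2 *v vecm D) $ r = (\<Sum>c\<in>UNIV. \<Sum>d\<in>UNIV. S1$a$c * S2$b$d * D$d$c)"
      unfolding kron_def vecm_def matrix_vector_mult_def r UNIV_Times_UNIV[symmetric] sum.cartesian_product
      by (simp add: split_beta)
    also have "\<dots> = (\<Sum>c\<in>UNIV. (\<Sum>d\<in>UNIV. S2$b$d * D$d$c) * S1$a$c)"
      by (simp add: sum_distrib_left mult.commute mult.left_commute)
    also have "\<dots> = vecm (S2 ** D ** transpose S1) $ r"
      unfolding vecm_def r matrix_matrix_mult_def transpose_def by simp
    finally show ?thesis .
  qed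
  then show ?thesis by (simp add: vec_eq_iff)
qed

lemma mdiff1: "(A::real^'n^'n) ** (B - C) = A ** B - A ** C"
  by (simp add: matrix_matrix_mult_def vec_eq_iff sum_subtractf right_diff_distrib)
lemma mdiff2: "((B::real^'n^'n) - C) ** A = B ** A - C ** A"
  by (simp add: matrix_matrix_mult_def vec_eq_iff sum_subtractf left_diff_distrib)
lemma ds_convex: "convex (doubly_stochastic :: (real^'n^'n) set)"
proof (rule convexI)
  fix x y :: "real^'n^'n" and u v :: real
  assume xm: "x \<in> doubly_stochastic" and ym: "y \<in> doubly_stochastic"
    and uv: "0 \<le> u" "0 \<le> v" "u + v = 1"
  have x: "\<And>i j. 0 \<le> x $ i $ j" "\<And>i j. x $ i $ j \<le> 1" "\<And>i. (\<Sum>j\<in>UNIV. x $ i $ j) = 1" "\<And>j. (\<Sum>i\<in>UNIV. x $ i $ j) = 1"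
    using xm unfolding doubly_stochastic_def by auto
  have y: "\<And>i j. 0 \<le> y $ i $ j" "\<And>i j. y $ i $ j \<le> 1" "\<And>i. (\<Sum>j\<in>UNIV. y $ i $ j) = 1" "\<And>j. (\<Sum>i\<in>UNIV. y $ i $ j) = 1"
    using ym unfolding doubly_stochastic_def by auto
  have a: "0 \<le> u * x $ i $ j + v * y $ i $ j" for i j using x y uv by simp
  have b: "u * x $ i $ j + v * y $ i $ j \<le> 1" for i j
  proof -
    have "u * x $ i $ j + v * y $ i $ j \<le> u * 1 + v * 1"
      using x y uv by (intro add_mono mult_left_mono) auto
    then show ?thesis using uv by simp
  qed
  have c: "(\<Sum>j\<in>UNIV. u * x $ i $ j + v * y $ i $ j) = 1" for i
    using x y uv by (simp add: sum.distrib sum_distrib_left[symmetric])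
  have d: "(\<Sum>i\<in>UNIV. u * x $ i $ j + v * y $ i $ j) = 1" for j
    using x y uv by (simp add: sum.distrib sum_distrib_left[symmetric])
  show "u *\<^sub>R x + v *\<^sub>R y \<in> doubly_stochastic"
    unfolding doubly_stochastic_def using a b c d by simp
qed

lemma ds_nonempty: "(doubly_stochastic :: (real^'n^'n) set) \<noteq> {}"
proof -
  let ?c = "1 / real CARD('n)"
  have "(\<chi> i j. ?c) \<in> (doubly_stochastic :: (real^'n^'n) set)"
    unfolding doubly_stochastic_def by (simp add: divide_le_eq)
  then show ?thesis by blast
qed

lemma kron_bound:
  fixes S1 S2 D :: "real^'n^'n"
  shows "norm (S2 ** D ** transpose S1) \<le> spec_norm (kron S1 S2) * norm D"
proof -
  have "norm (kron S1 S2 *v vecm D) \<le> spec_norm (kron S1 S2) * norm (vecm D)"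
    unfolding spec_norm_def by (rule onorm) simp
  then show ?thesis by (simp add: kron_vecm norm_vecm)
qed

theorem theorem1:
  fixes S1 S2 :: "real^'n^'n" and P :: "nat \<Rightarrow> real^'n^'n" and \<epsilon> :: real
  assumes "P 0 \<in> doubly_stochastic"
    and "\<And>t. P (Suc t) = (1/2) *\<^sub>R (P t + proj_ds (S2 ** P t ** transpose S1))"
    and "\<epsilon> \<ge> 0"
    and "spec_norm (kron S1 S2) \<le> \<epsilon>"
    and "t \<ge> 1"
  shows "norm (P (t+1) - P t) \<le> (1/2 + \<epsilon>) * norm (P t - P (t-1))"
proof -
  obtain s where t: "t = Suc s" using assms(5) by (cases t) auto
  let ?G = "\<lambda>X. proj_ds (S2 ** X ** transpose S1)"
  let ?D = "P (Suc s) - P s"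
  have d: "P (Suc (Suc s)) - P (Suc s) = (1/2) *\<^sub>R ?D + (1/2) *\<^sub>R (?G (P (Suc s)) - ?G (P s))"
    using assms(2)[of "Suc s"] assms(2)[of s] by (simp add: algebra_simps)
  have lin: "S2 ** P (Suc s) ** transpose S1 - S2 ** P s ** transpose S1 = S2 ** ?D ** transpose S1"
    by (simp add: mdiff1 mdiff2)
  have "norm (?G (P (Suc s)) - ?G (P s)) \<le> norm (S2 ** P (Suc s) ** transpose S1 - S2 ** P s ** transpose S1)"
    using closest_point_lipschitz[OF ds_convex ds_closed ds_nonempty]
    unfolding proj_ds_def dist_norm by blast
  also have "\<dots> \<le> spec_norm (kron S1 S2) * norm ?D" unfolding lin by (rule kron_bound)
  also have "\<dots> \<le> \<epsilon> * norm ?D" using assms(4) by (simp add: mult_right_mono)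
  finally have g: "norm (?G (P (Suc s)) - ?G (P s)) \<le> \<epsilon> * norm ?D" .
  have "norm (P (Suc (Suc s)) - P (Suc s)) \<le> (1/2) * norm ?D + (1/2) * norm (?G (P (Suc s)) - ?G (P s))"
    unfolding d by (rule order_trans[OF norm_triangle_ineq]) simp
  also have "\<dots> \<le> (1/2) * norm ?D + (1/2) * (\<epsilon> * norm ?D)" using g by simp
  also have "\<dots> \<le> (1/2 + \<epsilon>) * norm ?D" using assms(3) by (simp add: algebra_simps)
  finally show ?thesis using t by simp
qed

end
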